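(* There exists a universal constant $C > 0$ such that for all $p \in (0,1)$, all $n \in \mathbb{N}_+$ and every $z \in \{0,1\}^{2n}$ with an even number of ones, we have $\mathcal{D}_{p,2n}(z) \geq C \cdot \mu_{p,2n}(z)$.
   Context: $\mu_{p,m}$ is the product $p$-biased distribution on $\{0,1\}^m$ (each coordinate equals $1$ independently with probability $p$), and $\mu_{p,m}(z)$ is the probability of $z$. The pull-back distribution $\mathcal{D}_{p,2n}$ on $\{0,1\}^{2n}$ is the distribution of $z$ obtained as follows: draw a uniformly random $2$-to-$1$ map $\pi : [2n] \to [n]$ (every element of $[n]$ has exactly two preimages), draw $x \sim \mu_{p,n}$ independently, and set $z_i = x_{\pi(i)}$ for all $i \in [2n]$; $\mathcal{D}_{p,2n}(z)$ denotes the probability of $z$. *)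

theory Defs
  imports "HOL-Analysis.Analysis"
begin

text \<open>Points of {0,1}^m are represented as functions nat => bool; only the
  values on the index set {0..<m} are relevant (coordinate i is 1 iff z i).\<close>

definition cube :: "nat \<Rightarrow> (nat \<Rightarrow> bool) set" where
  "cube m = PiE {0..<m} (\<lambda>_. UNIV)"

definition mu :: "real \<Rightarrow> nat \<Rightarrow> (nat \<Rightarrow> bool) \<Rightarrow> real" where
  "mu p m z = (\<Prod>i<m. if z i then p else 1 - p)"

definition two_to_one_maps :: "nat \<Rightarrow> (nat \<Rightarrow> nat) set" where
  "two_to_one_maps n = {\<pi> \<in> PiE {0..<2*n} (\<lambda>_. {0..<n}).
       \<forall>j<n. card {i \<in> {0..<2*n}. \<pi> i = j} = 2}"

text \<open>Pull-back distribution D_{p,2n}(z): pi uniform over 2-to-1 maps,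
  x ~ mu_{p,n} independent, z_i = x_{pi(i)}.\<close>
definition pullback :: "real \<Rightarrow> nat \<Rightarrow> (nat \<Rightarrow> bool) \<Rightarrow> real" where
  "pullback p n z =
     (\<Sum>\<pi>\<in>two_to_one_maps n. \<Sum>x\<in>cube n.
        (1 / real (card (two_to_one_maps n))) * mu p n x *
        (if (\<forall>i<2*n. z i = x (\<pi> i)) then 1 else 0))"

end

theory Submission
  imports Defs
begin
lemma choose_step_id: "(n choose Suc k) * Suc k = (n choose k) * (n - k)"
proof (cases n)
  case 0 then show ?thesis by simp
next
  case (Suc m)
  have "(n choose Suc k) * Suc k = n * (m choose k)" using Suc_times_binomial[of k m] Suc by (simp add: mult.commute)
  also have "\<dots> = (n choose k) * (n - k)" using binomial_absorb_comp[of n k] Suc by (simp add: mult.commute)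
  finally show ?thesis .
qed

lemma lc_step:
  assumes "a < b"
  shows "(n choose a) * (n choose b) \<le> (n choose Suc a) * (n choose (b - 1))"
proof (cases "b \<le> n")
  case False
  then show ?thesis by (simp add: binomial_eq_0 not_le)
next
  case True
  obtain c where c: "b = Suc c" using assms by (cases b) auto
  have "(n choose a) * (n choose b) * (Suc a * Suc c) = (n choose a) * ((n choose Suc c) * Suc c) * Suc a"
    using c by (simp only: mult_ac)
  also have "\<dots> = ((n choose a) * (n choose c)) * (Suc a * (n - c))"
    unfolding choose_step_id[of n c] by (simp only: mult_ac)
  also have "\<dots> \<le> ((n choose a) * (n choose c)) * ((n - a) * Suc c)"
  proof -
    have "Suc a * (n - c) \<le> Suc c * (n - a)" using assms c True by (intro mult_le_mono) auto
    then have "X * (Suc a * (n - c)) \<le> X * (Suc c * (n - a))" for X by (rule mult_le_mono2)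
    from this[of "(n choose a) * (n choose c)"] show ?thesis by (simp only: mult_ac)
  qed
  also have "\<dots> = (n choose a) * (n - a) * (n choose c) * Suc c" by (simp only: mult_ac)
  also have "\<dots> = (n choose Suc a) * (n choose c) * (Suc a * Suc c)"
    unfolding choose_step_id[of n a, symmetric] by (simp only: mult_ac)
  finally have H: "(n choose a) * (n choose b) * (Suc a * Suc c) \<le> (n choose Suc a) * (n choose c) * (Suc a * Suc c)" .
  have "0 < Suc a * Suc c \<longrightarrow> (n choose a) * (n choose b) \<le> (n choose Suc a) * (n choose c)"
    using H by (simp only: mult_le_cancel2)
  then show ?thesis using c by simp
qed

lemma lc_d: "d \<le> k \<Longrightarrow> (n choose (k - d)) * (n choose (k + d)) \<le> (n choose k)^2"
proof (induction d)
  case 0 then show ?case by (simp add: power2_eq_square)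
next
  case (Suc d)
  have "(n choose (k - Suc d)) * (n choose (k + Suc d)) \<le> (n choose Suc (k - Suc d)) * (n choose (k + Suc d - 1))"
    by (rule lc_step) auto
  also have "\<dots> = (n choose (k - d)) * (n choose (k + d))" using Suc.prems by (simp add: Suc_diff_Suc)
  finally show ?case using Suc by linarith
qed

lemma lc: "i \<le> 2*k \<Longrightarrow> (n choose i) * (n choose (2*k - i)) \<le> (n choose k)^2"
proof (cases "i \<le> k")
  case True
  assume "i \<le> 2*k"
  then show ?thesis using lc_d[of "k - i" k n] True by (simp add: mult_2)
next
  case False
  assume "i \<le> 2*k"
  have e: "k - (i - k) = 2*k - i" "k + (i - k) = i" using False \<open>i \<le> 2*k\<close> by auto
  show ?thesis using lc_d[of "i - k" k n] False \<open>i \<le> 2*k\<close> unfolding e by (simp add: mult.commute)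
qed

lemma amgm_aux:
  fixes x y c :: real
  assumes "0 \<le> x" "0 \<le> y" "0 \<le> c" "x * y \<le> c^2"
  shows "x * y \<le> c * (x + y) / 2"
proof (cases "c \<ge> (x + y)/2")
  case True
  have e: "((x+y)/2)^2 - x*y = ((x-y)/2)^2" by (simp add: power2_eq_square field_simps)
  have "x * y \<le> ((x+y)/2)^2" using e by (metis diff_ge_0_iff_ge zero_le_power2)
  also have "\<dots> = ((x+y)/2) * ((x+y)/2)" by (simp add: power2_eq_square)
  also have "\<dots> \<le> c * ((x+y)/2)" using True assms by (intro mult_right_mono) auto
  finally show ?thesis by simp
next
  case False
  have "c * c \<le> c * ((x+y)/2)" using False assms by (intro mult_left_mono) auto
  then show ?thesis using assms(4) by (simp add: power2_eq_square)
qed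

lemma key_ineq:
  fixes p :: real
  assumes p: "0 < p" "p < 1" and kn: "k \<le> n"
  shows "real ((2*n) choose (2*k)) * (real (n choose k) * p^k * (1-p)^(n-k)) \<le> real (n choose k)^2"
proof -
  define q where "q = 1 - p"
  have q: "0 < q" using p q_def by simp
  define b where "b i = real (n choose i) * p^i * q^(n-i)" for i
  have bnn: "b i \<ge> 0" for i using p q by (simp add: b_def)
  define M where "M = p^(2*k) * q^(2*n-2*k)"
  have Mpos: "M > 0" using p q by (simp add: M_def)
  have tm: "b i * b (2*k-i) = real ((n choose i) * (n choose (2*k-i))) * M" if "i \<le> 2*k" for i
  proof (cases "i \<le> n \<and> 2*k - i \<le> n")
    case True
    have e1: "p^i * p^(2*k-i) = p^(2*k)" using that by (simp add: power_add[symmetric])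
    have x: "n - i + (n - (2*k - i)) = 2*n - 2*k" using that True by auto
    have e2: "q^(n-i) * q^(n-(2*k-i)) = q^(2*n-2*k)" by (simp only: power_add[symmetric] x)
    have "b i * b (2*k-i) = real(n choose i) * real(n choose (2*k-i)) * (p^i * p^(2*k-i)) * (q^(n-i) * q^(n-(2*k-i)))"
      by (simp add: b_def mult_ac)
    then show ?thesis unfolding e1 e2 M_def by (simp add: mult_ac)
  next
    case False
    then show ?thesis by (auto simp: b_def)
  qed
  have bk: "b k * b k = real ((n choose k)^2) * M"
    using tm[of k] by (simp add: power2_eq_square mult_2)
  have S1: "(\<Sum>i\<le>2*k. b i * b (2*k-i)) = real ((2*n) choose (2*k)) * M"
  proof -
    have "(\<Sum>i\<le>2*k. b i * b (2*k-i)) = (\<Sum>i\<le>2*k. real ((n choose i) * (n choose (2*k-i))) * M)"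
      by (rule sum.cong) (auto simp: tm)
    also have "\<dots> = real (\<Sum>i\<le>2*k. (n choose i) * (n choose (2*k-i))) * M"
      by (simp add: sum_distrib_right)
    also have "\<dots> = real ((2*n) choose (2*k)) * M" by (simp add: vandermonde mult_2)
    finally show ?thesis .
  qed
  have LC: "b i * b (2*k-i) \<le> (b k)^2" if "i \<le> 2*k" for i
  proof -
    have "real ((n choose i) * (n choose (2*k-i))) \<le> real ((n choose k)^2)"
      using lc[OF that, of n] by linarith
    then have "real ((n choose i) * (n choose (2*k-i))) * M \<le> real ((n choose k)^2) * M"
      using Mpos by (intro mult_right_mono) auto
    then show ?thesis using tm[OF that] bk by (simp add: power2_eq_square)
  qed
  have refl: "(\<Sum>i\<le>2*k. b (2*k-i)) = (\<Sum>i\<le>2*k. b i)"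
    by (rule sum.reindex_bij_witness[where i="\<lambda>i. 2*k-i" and j="\<lambda>i. 2*k-i"]) auto
  have tot: "(\<Sum>i\<le>n. b i) = 1"
    using binomial_ring[of p q n] by (simp add: b_def q_def mult.assoc)
  have le1: "(\<Sum>i\<le>2*k. b i) \<le> 1"
  proof -
    have "(\<Sum>i\<le>2*k. b i) \<le> (\<Sum>i\<le>2*k+n. b i)" by (rule sum_mono2) (auto simp: bnn)
    also have "\<dots> = (\<Sum>i\<le>n. b i)"
      by (rule sum.mono_neutral_right) (auto simp: b_def)
    finally show ?thesis using tot by simp
  qed
  have "(\<Sum>i\<le>2*k. b i * b (2*k-i)) \<le> (\<Sum>i\<le>2*k. b k * (b i + b (2*k-i)) / 2)"
  proof (rule sum_mono)
    fix i assume "i \<in> {..2*k}"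
    then show "b i * b (2*k-i) \<le> b k * (b i + b (2*k-i)) / 2" by (intro amgm_aux bnn LC) auto
  qed
  also have "\<dots> = b k * ((\<Sum>i\<le>2*k. b i) + (\<Sum>i\<le>2*k. b (2*k-i))) / 2"
    by (simp add: sum_distrib_left sum.distrib sum_divide_distrib[symmetric] algebra_simps)
  also have "\<dots> = b k * (\<Sum>i\<le>2*k. b i)" using refl by simp
  also have "\<dots> \<le> b k" using le1 bnn[of k] by (simp add: mult_left_le)
  finally have "real ((2*n) choose (2*k)) * M \<le> b k" using S1 by simp
  then have "real ((2*n) choose (2*k)) * M * b k \<le> b k * b k" using bnn[of k] by (simp add: mult_right_mono)
  then have "(real ((2*n) choose (2*k)) * b k) * M \<le> real ((n choose k)^2) * M" using bk by (simp add: algebra_simps)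
  then have "real ((2*n) choose (2*k)) * b k \<le> real ((n choose k)^2)" using Mpos by simp
  then show ?thesis by (simp add: b_def q_def)
qed

definition tw :: "nat set \<Rightarrow> nat set \<Rightarrow> (nat \<Rightarrow> nat) set" where
  "tw D R = {\<pi> \<in> PiE D (\<lambda>_. R). \<forall>j\<in>R. card {i \<in> D. \<pi> i = j} = 2}"

lemma tw_image:
  assumes "\<sigma> \<in> tw D A"
  shows "\<sigma> ` D = A"
proof
  show "\<sigma> ` D \<subseteq> A" using assms by (auto simp: tw_def PiE_def Pi_def)
  show "A \<subseteq> \<sigma> ` D"
  proof
    fix j assume j: "j \<in> A"
    then have "card {i \<in> D. \<sigma> i = j} = 2" using assms by (auto simp: tw_def)
    then have "{i \<in> D. \<sigma> i = j} \<noteq> {}" by (metis card.empty zero_neq_numeral)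
    then show "j \<in> \<sigma> ` D" by auto
  qed
qed

lemma tw_card:
  assumes "finite R"
  shows "finite D \<Longrightarrow> card D = 2 * card R \<Longrightarrow> card (tw D R) * 2 ^ card R = fact (card D)"
  using assms
proof (induction R arbitrary: D rule: finite_induct)
  case empty
  then have D: "D = {}" by auto
  have "tw D {} = {\<lambda>_. undefined}" unfolding D by (auto simp: tw_def)
  then show ?case using D by simp
next
  case (insert r R D)
  define Ps where "Ps = {P. P \<subseteq> D \<and> card P = 2}"
  define F where "F P = {\<pi> \<in> tw D (insert r R). {i\<in>D. \<pi> i = r} = P}" for P
  define g where "g P \<sigma> = (\<lambda>i. if i \<in> P then r else \<sigma> i)" for P and \<sigma> :: "nat \<Rightarrow> nat"
  have cardF: "card (F P) = card (tw (D - P) R)" if P: "P \<in> Ps" for P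
  proof -
    have PD: "P \<subseteq> D" using P by (auto simp: Ps_def)
    have "bij_betw (\<lambda>\<pi>. restrict \<pi> (D - P)) (F P) (tw (D - P) R)"
    proof (rule bij_betw_byWitness[where f' = "g P"])
      show "\<forall>\<pi>\<in>F P. g P (restrict \<pi> (D - P)) = \<pi>"
      proof
        fix \<pi> assume \<pi>: "\<pi> \<in> F P"
        then have fib: "{i\<in>D. \<pi> i = r} = P" and piE: "\<pi> \<in> PiE D (\<lambda>_. insert r R)"
          by (auto simp: F_def tw_def)
        show "g P (restrict \<pi> (D - P)) = \<pi>"
        proof
          fix i
          show "g P (restrict \<pi> (D - P)) i = \<pi> i"
          proof (cases "i \<in> P")
            case True
            then have "i \<in> {i\<in>D. \<pi> i = r}" using fib by simp
            then have "\<pi> i = r" by simp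
            then show ?thesis using True by (simp add: g_def)
          next
            case False
            show ?thesis
            proof (cases "i \<in> D")
              case True then show ?thesis using False by (simp add: g_def)
            next
              case F2: False
              have "\<pi> i = undefined" by (rule PiE_arb[OF piE F2])
              then show ?thesis using False F2 by (simp add: g_def)
            qed
          qed
        qed
      qed
      show "\<forall>\<sigma>\<in>tw (D - P) R. restrict (g P \<sigma>) (D - P) = \<sigma>"
      proof
        fix \<sigma> assume "\<sigma> \<in> tw (D - P) R"
        then have sE: "\<sigma> \<in> PiE (D - P) (\<lambda>_. R)" by (auto simp: tw_def)
        show "restrict (g P \<sigma>) (D - P) = \<sigma>"
        proof
          fix i show "restrict (g P \<sigma>) (D - P) i = \<sigma> i"
          proof (cases "i \<in> D - P")
            case True then show ?thesis by (simp add: g_def)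
          next
            case False
            have "\<sigma> i = undefined" by (rule PiE_arb[OF sE False])
            then show ?thesis using False by auto
          qed
        qed
      qed
      show "(\<lambda>\<pi>. restrict \<pi> (D - P)) ` F P \<subseteq> tw (D - P) R"
      proof
        fix \<rho> assume "\<rho> \<in> (\<lambda>\<pi>. restrict \<pi> (D - P)) ` F P"
        then obtain \<pi> where \<pi>: "\<pi> \<in> F P" and \<rho>: "\<rho> = restrict \<pi> (D - P)" by auto
        then have fib: "{i\<in>D. \<pi> i = r} = P" and piE: "\<pi> \<in> PiE D (\<lambda>_. insert r R)"
          and cards: "\<forall>j\<in>insert r R. card {i \<in> D. \<pi> i = j} = 2"
          by (auto simp: F_def tw_def)
        have "\<rho> \<in> PiE (D - P) (\<lambda>_. R)"
        proof -
          have "\<pi> i \<in> R" if "i \<in> D - P" for i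
          proof -
            have "\<pi> i \<in> insert r R" using piE that by auto
            moreover have "\<pi> i \<noteq> r" using fib that by auto
            ultimately show ?thesis by auto
          qed
          then show ?thesis unfolding \<rho> by auto
        qed
        moreover have "card {i \<in> D - P. \<rho> i = j} = 2" if j: "j \<in> R" for j
        proof -
          have "{i \<in> D - P. \<rho> i = j} = {i \<in> D. \<pi> i = j}"
            using fib j insert.hyps(2) unfolding \<rho> by auto
          then show ?thesis using cards j by auto
        qed
        ultimately show "\<rho> \<in> tw (D - P) R" by (auto simp: tw_def)
      qed
      show "g P ` tw (D - P) R \<subseteq> F P"
      proof
        fix \<rho> assume "\<rho> \<in> g P ` tw (D - P) R"
        then obtain \<sigma> where \<sigma>: "\<sigma> \<in> tw (D - P) R" and \<rho>: "\<rho> = g P \<sigma>" by auto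
        then have sE: "\<sigma> \<in> PiE (D - P) (\<lambda>_. R)" and cards: "\<forall>j\<in>R. card {i \<in> D - P. \<sigma> i = j} = 2"
          by (auto simp: tw_def)
        have fibr: "{i\<in>D. \<rho> i = r} = P"
          using PD sE insert.hyps(2) unfolding \<rho> g_def by (auto simp: PiE_def Pi_def)
        have "\<rho> \<in> PiE D (\<lambda>_. insert r R)"
          using PD sE unfolding \<rho> g_def by (auto simp: PiE_def Pi_def extensional_def)
        moreover have "card {i \<in> D. \<rho> i = j} = 2" if j: "j \<in> insert r R" for j
        proof (cases "j = r")
          case True then show ?thesis using fibr P by (auto simp: Ps_def)
        next
          case False
          then have jR: "j \<in> R" using j by auto
          have "{i \<in> D. \<rho> i = j} = {i \<in> D - P. \<sigma> i = j}"
            using False unfolding \<rho> g_def by auto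
          then show ?thesis using cards jR by auto
        qed
        ultimately show "\<rho> \<in> F P" using fibr by (auto simp: F_def tw_def)
      qed
    qed
    then show ?thesis by (rule bij_betw_same_card)
  qed
  have finPs: "finite Ps" using insert.prems(1) by (auto simp: Ps_def)
  have union: "tw D (insert r R) = (\<Union>P\<in>Ps. F P)"
  proof
    show "tw D (insert r R) \<subseteq> (\<Union>P\<in>Ps. F P)"
    proof
      fix \<pi> assume \<pi>: "\<pi> \<in> tw D (insert r R)"
      then have "{i\<in>D. \<pi> i = r} \<in> Ps" by (auto simp: tw_def Ps_def)
      moreover have "\<pi> \<in> F {i\<in>D. \<pi> i = r}" using \<pi> by (auto simp: F_def)
      ultimately show "\<pi> \<in> (\<Union>P\<in>Ps. F P)" by blast
    qed
    show "(\<Union>P\<in>Ps. F P) \<subseteq> tw D (insert r R)" by (auto simp: F_def)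
  qed
  have finF: "finite (F P)" for P
  proof -
    have "F P \<subseteq> PiE D (\<lambda>_. insert r R)" by (auto simp: F_def tw_def)
    moreover have "finite (PiE D (\<lambda>_. insert r R))"
      using insert.prems(1) insert.hyps(1) by (intro finite_PiE) auto
    ultimately show ?thesis by (rule finite_subset)
  qed
  have "card (tw D (insert r R)) = (\<Sum>P\<in>Ps. card (F P))"
    unfolding union by (rule card_UN_disjoint) (use finPs finF in \<open>auto simp: F_def\<close>)
  also have "\<dots> = (\<Sum>P\<in>Ps. card (tw (D - P) R))" by (rule sum.cong) (auto simp: cardF)
  finally have c1: "card (tw D (insert r R)) = (\<Sum>P\<in>Ps. card (tw (D - P) R))" .
  have cR: "card (insert r R) = Suc (card R)" using insert.hyps by simp
  have N: "card D = 2 * card R + 2" using insert.prems(2) cR by simp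
  have each: "card (tw (D - P) R) * 2 ^ card R = fact (card D - 2)" if "P \<in> Ps" for P
  proof -
    have "P \<subseteq> D" "card P = 2" using that by (auto simp: Ps_def)
    then have "card (D - P) = card D - 2" using insert.prems(1) by (simp add: card_Diff_subset finite_subset)
    then have "card (D - P) = 2 * card R" using N by simp
    then have "card (tw (D - P) R) * 2 ^ card R = fact (card (D - P))"
      using insert.IH[of "D - P"] insert.prems(1) by auto
    then show ?thesis using \<open>card (D - P) = card D - 2\<close> by simp
  qed
  have "card (tw D (insert r R)) * 2 ^ card (insert r R) = (\<Sum>P\<in>Ps. card (tw (D - P) R) * 2 ^ card R) * 2"
    unfolding c1 cR by (simp add: sum_distrib_right[symmetric] mult_ac)
  also have "\<dots> = (\<Sum>P\<in>Ps. fact (card D - 2)) * 2" by (simp add: each)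
  also have "\<dots> = card Ps * fact (card D - 2) * 2" by simp
  also have "\<dots> = (card D choose 2) * fact (card D - 2) * 2"
    using n_subsets[OF insert.prems(1), of 2] by (simp add: Ps_def)
  also have "\<dots> = fact (card D)"
    using binomial_fact_lemma[of 2 "card D"] N by (simp add: mult_ac)
  finally show ?case .
qed

lemma prod_if_pow:
  fixes a b :: real
  assumes "finite R"
  shows "(\<Prod>j\<in>R. if P j then a else b) = a ^ card {j\<in>R. P j} * b ^ card {j\<in>R. \<not> P j}"
proof -
  have e: "R \<inter> {x. P x} = {j\<in>R. P j}" "R \<inter> - {x. P x} = {j\<in>R. \<not> P j}" by auto
  show ?thesis using prod.If_cases[OF assms, of P "\<lambda>_. a" "\<lambda>_. b"] unfolding e by simp
qed

lemma tw_finite: "finite D \<Longrightarrow> finite R \<Longrightarrow> finite (tw D R)"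
proof -
  assume "finite D" "finite R"
  then have "finite (PiE D (\<lambda>_. R))" by (intro finite_PiE) auto
  moreover have "tw D R \<subseteq> PiE D (\<lambda>_. R)" by (auto simp: tw_def)
  ultimately show ?thesis by (rule finite_subset[rotated])
qed

theorem mainTheorem2:
  shows "\<exists>C::real. C > 0 \<and>
    (\<forall>p::real. \<forall>n::nat. \<forall>z. 0 < p \<and> p < 1 \<and> n \<ge> 1 \<and> z \<in> cube (2*n)
       \<and> even (card {i \<in> {0..<2*n}. z i})
       \<longrightarrow> pullback p n z \<ge> C * mu p (2*n) z)"
proof (intro exI[of _ "1::real"] conjI allI impI)
  show "(0::real) < 1" by simp
next
  fix p :: real and n :: nat and z :: "nat \<Rightarrow> bool"
  assume H: "0 < p \<and> p < 1 \<and> n \<ge> 1 \<and> z \<in> cube (2*n) \<and> even (card {i \<in> {0..<2*n}. z i})"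
  then have p: "0 < p" "p < 1" and ev: "even (card {i \<in> {0..<2*n}. z i})" by auto
  define q where "q = 1 - p"
  have q: "0 < q" using p by (simp add: q_def)
  define U where "U = {0..<2*n}"
  define R where "R = {0..<n}"
  define S where "S = {i \<in> U. z i}"
  obtain k where k: "card S = 2*k" using ev unfolding S_def U_def by (auto elim: evenE)
  have SU: "S \<subseteq> U" by (auto simp: S_def)
  have finU: "finite U" "finite R" by (auto simp: U_def R_def)
  have cU: "card U = 2*n" "card R = n" by (auto simp: U_def R_def)
  have finS: "finite S" "finite (U - S)" using finU SU finite_subset by auto
  have kn: "k \<le> n" using card_mono[OF finU(1) SU] k cU by simp
  have cUS: "card (U - S) = 2*(n-k)" using card_Diff_subset[OF finS(1) SU] k cU by simp
  define T where "T = two_to_one_maps n"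
  have T: "T = tw U R" by (auto simp: T_def two_to_one_maps_def tw_def U_def R_def)
  have finT: "finite T" using T finU tw_finite by simp
  have cardT: "card T * 2^n = fact (2*n)" using tw_card[OF finU(2) finU(1)] cU T by simp
  define Ks where "Ks = {A. A \<subseteq> R \<and> card A = k}"
  define Sig where "Sig = (SIGMA A:Ks. tw S A \<times> tw (U - S) (R - A))"
  define \<Phi> where "\<Phi> = (\<lambda>(A::nat set, \<sigma>::nat\<Rightarrow>nat, \<tau>::nat\<Rightarrow>nat). (\<lambda>i. if i \<in> S then \<sigma> i else \<tau> i))"
  have finKs: "finite Ks" using finU(2) by (auto simp: Ks_def)
  have cardSig: "card Sig * 2^n = (n choose k) * (fact (2*k) * fact (2*n - 2*k))"
  proof -
    have each: "card (tw S A \<times> tw (U - S) (R - A)) * 2^n = fact (2*k) * fact (2*n - 2*k)" if "A \<in> Ks" for A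
    proof -
      have A: "A \<subseteq> R" "card A = k" using that by (auto simp: Ks_def)
      have finA: "finite A" using A finU finite_subset by auto
      have cRA: "card (R - A) = n - k" using A cU finA card_Diff_subset by metis
      have c1: "card (tw S A) * 2^k = fact (2*k)" using tw_card[OF finA finS(1)] A k by simp
      have c2: "card (tw (U - S) (R - A)) * 2^(n-k) = fact (2*n - 2*k)"
        using tw_card[of "R - A" "U - S"] finS cUS cRA finU by (simp add: right_diff_distrib')
      have "(2::nat)^n = 2^k * 2^(n-k)" using kn by (simp add: power_add[symmetric])
      then have "card (tw S A \<times> tw (U - S) (R - A)) * 2^n = (card (tw S A) * 2^k) * (card (tw (U - S) (R - A)) * 2^(n-k))"
        by (simp add: card_cartesian_product mult_ac)
      then show ?thesis using c1 c2 by simp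
    qed
    have "card Sig = (\<Sum>A\<in>Ks. card (tw S A \<times> tw (U - S) (R - A)))" unfolding Sig_def
    proof (rule card_SigmaI[OF finKs])
      show "\<forall>A\<in>Ks. finite (tw S A \<times> tw (U - S) (R - A))"
      proof
        fix A assume "A \<in> Ks"
        then have "finite A" using finU finite_subset by (auto simp: Ks_def)
        then show "finite (tw S A \<times> tw (U - S) (R - A))" using finS finU tw_finite by auto
      qed
    qed
    then have "card Sig * 2^n = (\<Sum>A\<in>Ks. card (tw S A \<times> tw (U - S) (R - A)) * 2^n)"
      by (simp add: sum_distrib_right)
    also have "\<dots> = (\<Sum>A\<in>Ks. fact (2*k) * fact (2*n - 2*k))" by (rule sum.cong) (auto simp: each)
    also have "\<dots> = card Ks * (fact (2*k) * fact (2*n - 2*k))" by simp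
    also have "card Ks = n choose k" using n_subsets[OF finU(2), of k] cU by (simp add: Ks_def)
    finally show ?thesis .
  qed
  define m where "m = p^k * q^(n-k)"
  have mnn: "m \<ge> 0" using p q by (simp add: m_def)
  define inner where "inner \<pi> = (\<Sum>x\<in>cube n. (1 / real (card T)) * mu p n x * (if (\<forall>i<2*n. z i = x (\<pi> i)) then 1 else 0))" for \<pi>
  have pb: "pullback p n z = (\<Sum>\<pi>\<in>T. inner \<pi>)" by (simp add: pullback_def inner_def T_def)
  have munn: "mu p n x \<ge> 0" for x using p unfolding mu_def by (intro prod_nonneg) auto
  have finCube: "finite (cube n)" by (simp add: cube_def finite_PiE)
  have inner_nn: "inner \<pi> \<ge> 0" for \<pi> unfolding inner_def using munn by (intro sum_nonneg) auto
  have memb: "A \<in> Ks" "\<sigma> \<in> tw S A" "\<tau> \<in> tw (U - S) (R - A)" if "(A, \<sigma>, \<tau>) \<in> Sig" for A \<sigma> \<tau>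
    using that by (auto simp: Sig_def)
  have sub: "\<Phi> ` Sig \<subseteq> T"
  proof
    fix h assume "h \<in> \<Phi> ` Sig"
    then obtain A \<sigma> \<tau> where t: "(A, \<sigma>, \<tau>) \<in> Sig" and h: "h = (\<lambda>i. if i \<in> S then \<sigma> i else \<tau> i)"
      by (auto simp: \<Phi>_def)
    note mm = memb[OF t]
    have AR: "A \<subseteq> R" using mm(1) by (auto simp: Ks_def)
    have sE: "\<sigma> \<in> PiE S (\<lambda>_. A)" and tE: "\<tau> \<in> PiE (U - S) (\<lambda>_. R - A)" using mm by (auto simp: tw_def)
    have sA: "\<sigma> i \<in> A" if "i \<in> S" for i using sE that by auto
    have tA: "\<tau> i \<in> R - A" if "i \<in> U - S" for i using tE that by auto
    have hE: "h \<in> PiE U (\<lambda>_. R)"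
    proof (unfold PiE_iff, intro conjI ballI)
      fix i assume "i \<in> U" then show "h i \<in> R" using sA tA AR h by auto
    next
      show "h \<in> extensional U"
      proof (unfold extensional_def, intro CollectI allI impI)
        fix i assume "i \<notin> U"
        then have "i \<notin> S" "i \<notin> U - S" using SU by auto
        then show "h i = undefined" using PiE_arb[OF tE] h by simp
      qed
    qed
    have hc: "card {i \<in> U. h i = j} = 2" if j: "j \<in> R" for j
    proof (cases "j \<in> A")
      case True
      have "{i \<in> U. h i = j} = {i \<in> S. \<sigma> i = j}"
      proof (intro set_eqI iffI)
        fix i assume i: "i \<in> {i \<in> U. h i = j}"
        show "i \<in> {i \<in> S. \<sigma> i = j}"
        proof (cases "i \<in> S")
          case True then show ?thesis using i h by auto
        next
          case False
          then have "\<tau> i \<in> R - A" using tA i by auto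
          then show ?thesis using i h False \<open>j \<in> A\<close> by auto
        qed
      next
        fix i assume "i \<in> {i \<in> S. \<sigma> i = j}"
        then show "i \<in> {i \<in> U. h i = j}" using SU h by auto
      qed
      then show ?thesis using mm(2) True by (auto simp: tw_def)
    next
      case False
      have "{i \<in> U. h i = j} = {i \<in> U - S. \<tau> i = j}" using sA False h by auto
      then show ?thesis using mm(3) False j by (auto simp: tw_def)
    qed
    show "h \<in> T" unfolding T tw_def using hE hc by auto
  qed
  have inj: "inj_on \<Phi> Sig"
  proof (rule inj_onI)
    fix t1 t2 assume t1: "t1 \<in> Sig" and t2: "t2 \<in> Sig" and eq: "\<Phi> t1 = \<Phi> t2"
    obtain A \<sigma> \<tau> where e1: "t1 = (A, \<sigma>, \<tau>)" by (cases t1) auto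
    obtain A' \<sigma>' \<tau>' where e2: "t2 = (A', \<sigma>', \<tau>')" by (cases t2) auto
    note m1 = memb[OF t1[unfolded e1]] and m2 = memb[OF t2[unfolded e2]]
    have sE: "\<sigma> \<in> PiE S (\<lambda>_. A)" "\<sigma>' \<in> PiE S (\<lambda>_. A')" and tE: "\<tau> \<in> PiE (U - S) (\<lambda>_. R - A)" "\<tau>' \<in> PiE (U - S) (\<lambda>_. R - A')"
      using m1 m2 by (auto simp: tw_def)
    have pt: "(if i \<in> S then \<sigma> i else \<tau> i) = (if i \<in> S then \<sigma>' i else \<tau>' i)" for i
      using eq unfolding e1 e2 \<Phi>_def by (simp add: fun_eq_iff)
    have ss: "\<sigma> = \<sigma>'"
    proof
      fix i show "\<sigma> i = \<sigma>' i"
      proof (cases "i \<in> S")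
        case True then show ?thesis using pt[of i] by simp
      next
        case False then show ?thesis using PiE_arb[OF sE(1) False] PiE_arb[OF sE(2) False] by simp
      qed
    qed
    have tt: "\<tau> = \<tau>'"
    proof
      fix i show "\<tau> i = \<tau>' i"
      proof (cases "i \<in> S")
        case False then show ?thesis using pt[of i] by simp
      next
        case True then have "i \<notin> U - S" by simp
        then show ?thesis using PiE_arb[OF tE(1)] PiE_arb[OF tE(2)] by simp
      qed
    qed
    have "A = A'" using tw_image[OF m1(2)] tw_image[OF m2(2)] ss by simp
    then show "t1 = t2" using e1 e2 ss tt by simp
  qed
  have lb: "inner (\<Phi> t) \<ge> (1 / real (card T)) * m" if t: "t \<in> Sig" for t
  proof -
    obtain A \<sigma> \<tau> where e1: "t = (A, \<sigma>, \<tau>)" by (cases t) auto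
    note mm = memb[OF t[unfolded e1]]
    have AR: "A \<subseteq> R" and cA: "card A = k" using mm(1) by (auto simp: Ks_def)
    have sE: "\<sigma> \<in> PiE S (\<lambda>_. A)" and tE: "\<tau> \<in> PiE (U - S) (\<lambda>_. R - A)" using mm by (auto simp: tw_def)
    have sA: "\<sigma> i \<in> A" if "i \<in> S" for i using sE that by auto
    have tA: "\<tau> i \<in> R - A" if "i \<in> U - S" for i using tE that by auto
    define x where "x = restrict (\<lambda>j. j \<in> A) R"
    have xc: "x \<in> cube n" by (simp add: x_def cube_def R_def)
    have cond: "\<forall>i<2*n. z i = x (\<Phi> t i)"
    proof (intro allI impI)
      fix i assume "i < 2*n"
      then have iU: "i \<in> U" by (simp add: U_def)
      show "z i = x (\<Phi> t i)"
      proof (cases "i \<in> S")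
        case True
        then have "z i" by (simp add: S_def)
        moreover have "\<Phi> t i = \<sigma> i" using True by (simp add: e1 \<Phi>_def)
        moreover have "\<sigma> i \<in> A" "\<sigma> i \<in> R" using sA[OF True] AR by auto
        ultimately show ?thesis by (simp add: x_def)
      next
        case False
        then have "\<not> z i" using iU by (simp add: S_def)
        moreover have "\<Phi> t i = \<tau> i" using False by (simp add: e1 \<Phi>_def)
        moreover have "\<tau> i \<in> R - A" using tA iU False by simp
        ultimately show ?thesis by (simp add: x_def)
      qed
    qed
    have mux: "mu p n x = m"
    proof -
      have "mu p n x = (\<Prod>j\<in>R. if j \<in> A then p else q)"
        unfolding mu_def R_def q_def by (rule prod.cong) (auto simp: x_def R_def)
      also have "\<dots> = p ^ card {j\<in>R. j \<in> A} * q ^ card {j\<in>R. j \<notin> A}" by (rule prod_if_pow[OF finU(2)])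
      also have "{j\<in>R. j \<in> A} = A" using AR by auto
      also have "{j\<in>R. j \<notin> A} = R - A" by auto
      also have "card (R - A) = n - k" using AR cA cU finU(2) finite_subset card_Diff_subset by metis
      finally show ?thesis using cA by (simp add: m_def)
    qed
    have "(1 / real (card T)) * mu p n x * (if (\<forall>i<2*n. z i = x (\<Phi> t i)) then 1 else 0) \<le> inner (\<Phi> t)"
      unfolding inner_def by (rule member_le_sum[OF xc _ finCube]) (use munn in auto)
    then show ?thesis using cond mux by simp
  qed
  have "(\<Sum>\<pi>\<in>\<Phi> ` Sig. inner \<pi>) \<le> (\<Sum>\<pi>\<in>T. inner \<pi>)"
    by (rule sum_mono2[OF finT sub]) (auto simp: inner_nn)
  moreover have "(\<Sum>\<pi>\<in>\<Phi> ` Sig. inner \<pi>) = (\<Sum>t\<in>Sig. inner (\<Phi> t))" using sum.reindex[OF inj, of inner] by (simp add: comp_def)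
  moreover have "(\<Sum>t\<in>Sig. (1 / real (card T)) * m) \<le> (\<Sum>t\<in>Sig. inner (\<Phi> t))" by (rule sum_mono) (use lb in auto)
  ultimately have main: "real (card Sig) * ((1 / real (card T)) * m) \<le> pullback p n z" using pb by simp
  have muz: "mu p (2*n) z = m^2"
  proof -
    have "mu p (2*n) z = (\<Prod>i\<in>U. if z i then p else q)"
      unfolding mu_def U_def q_def by (simp add: atLeast0LessThan)
    also have "\<dots> = p ^ card {i\<in>U. z i} * q ^ card {i\<in>U. \<not> z i}" by (rule prod_if_pow[OF finU(1)])
    also have "{i\<in>U. \<not> z i} = U - S" by (auto simp: S_def)
    also have "{i\<in>U. z i} = S" by (simp add: S_def)
    finally have "mu p (2*n) z = p ^ (2*k) * q ^ (2*(n-k))" using k cUS by simp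
    then show ?thesis unfolding m_def by (simp add: power_mult_distrib power_mult[symmetric] mult.commute[of 2])
  qed
  define C1 where "C1 = real (n choose k)"
  define C2 where "C2 = real ((2*n) choose (2*k))"
  define F where "F = real (fact (2*k) * fact (2*n - 2*k) :: nat)"
  have C1pos: "C1 > 0" using kn by (simp add: C1_def)
  have C2pos: "C2 > 0" using kn by (simp add: C2_def)
  have Fpos: "F > 0" by (simp add: F_def)
  have fct: "fact (2*n) = (((2*n) choose (2*k)) * (fact (2*k) * fact (2*n - 2*k)) :: nat)"
    using binomial_fact_lemma[of "2*k" "2*n"] kn by (simp add: mult_ac)
  have rT: "real (card T) * 2^n = C2 * F"
    using arg_cong[OF cardT, of real] fct unfolding C2_def F_def by (simp only: of_nat_mult of_nat_power) simp
  have rS: "real (card Sig) * 2^n = C1 * F"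
    using arg_cong[OF cardSig, of real] unfolding C1_def F_def by (simp only: of_nat_mult of_nat_power) simp
  have ratio: "real (card Sig) / real (card T) = C1 / C2"
  proof -
    have "real (card Sig) / real (card T) = (real (card Sig) * 2^n) / (real (card T) * 2^n)" by simp
    also have "\<dots> = (C1 * F) / (C2 * F)" using rS rT by simp
    also have "\<dots> = C1 / C2" using Fpos by simp
    finally show ?thesis .
  qed
  have KI: "C2 * (C1 * m) \<le> C1^2"
    using key_ineq[OF p kn] unfolding C1_def C2_def m_def q_def by (simp add: mult_ac)
  have "C2 * m \<le> C1" using KI C1pos by (simp add: power2_eq_square mult_ac)
  then have mC: "m \<le> C1 / C2" using C2pos by (simp add: pos_le_divide_eq mult.commute)
  have "1 * mu p (2*n) z = m * m" using muz by (simp add: power2_eq_square)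
  also have "\<dots> \<le> (C1 / C2) * m" using mC mnn by (intro mult_right_mono) auto
  also have "\<dots> = (real (card Sig) / real (card T)) * m" using ratio by simp
  also have "\<dots> = real (card Sig) * ((1 / real (card T)) * m)" by simp
  also have "\<dots> \<le> pullback p n z" by (rule main)
  finally show "1 * mu p (2*n) z \<le> pullback p n z" .
qed
end
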